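(* Let $A\in\mathbb{R}_{\max}^{n\times n}$ with $\lambda(A)=0$, let $g=g(\mathrm{crit}(A))$, assume $T_1(A)=\mathrm{DM}(g,n)$ and that $\mathrm{crit}(A)$ contains, up to choice of first node, a unique cycle $Z_0$ of length $g$. Let $i$ be a node of $Z_0$ and $j$ a node not in $Z_0$. Then in any interesting walk: (i) between any two consecutive occurrences of $i$ there is exactly one occurrence of $j$; (ii) there is exactly one occurrence of $j$ before the first occurrence of $i$ and exactly one occurrence of $j$ after the last occurrence of $i$.
   Context: Max-plus semiring $\mathbb{R}_{\max}=\mathbb{R}\cup\{-\infty\}$ with $a\oplus b=\max(a,b)$, $a\otimes b=a+b$; $(AB)_{ij}=\max_k(a_{ik}+b_{kj})$; $A^t$ is the $t$-th max-plus power, $A^0=I$. $\mathcal{D}(A)$ is the digraph on $\{1,\dots,n\}$ with arc $(i,j)$ of weight $a_{ij}$ whenever $a_{ij}\ne-\infty$. A walk is a node sequence whose consecutive pairs are arcs, its length is its number of arcs and its weight the sum of its arc weights; cycles are closed walks with no proper closed subwalk. $\lambda(A)$ is the maximal cycle mean. $\mathrm{crit}(A)$ is the subgraph of all nodes and arcs of cycles attaining $\lambda(A)$; its nodes are critical. $g(\mathrm{crit}(A))$ is the maximum over strongly connected components of $\mathrm{crit}(A)$ of their minimal cycle length. The cyclicity of $\mathrm{crit}(A)$ is the lcm over components of the gcd of their cycle lengths. CSR terms: with $\gamma$ the cyclicity of $\mathrm{crit}(A)$ and $\lambda(A)=0$, $M=I\oplus N\oplus\dots\oplus N^{n-1}$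 where $N=A^\gamma$: $c_{ij}=m_{ij}$ if $j$ critical, else $-\infty$; $r_{ij}=m_{ij}$ if $i$ critical, else $-\infty$; $s_{ij}=a_{ij}$ if $(i,j)$ is an arc of $\mathrm{crit}(A)$, else $-\infty$; $CS^tR[A]$ is the product $CS^tR$. $B_N$ has $(B_N)_{ij}=-\infty$ if $i$ or $j$ is critical and $a_{ij}$ otherwise. $T_1(A)$ is the least $T\ge0$ with $A^t=CS^tR[A]\oplus B_N^t$ for all $t\ge T$. $\mathrm{DM}(g,n)=g(n-2)+n$. Twice optimal / interesting walks: a walk $W$ from $i$ to $j$ passing through at least one node of $Z_0$ is twice optimal if it has maximal weight among all walks from $i$ to $j$ passing through a node of $Z_0$ whose length is congruent to the length of $W$ modulo $g$, and has minimal length among all such walks of maximal weight. It is interesting if it is twice optimal and has length $\mathrm{DM}(g,n)+g-1$. *)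

theory Defs
  imports Main "HOL-Library.Extended_Real"
begin

text \<open>Max-plus matrices over a finite node type 'n (n = CARD('n)); entries in ereal,
  where -\<infinity> is the max-plus zero. Entries +\<infinity> are excluded by hypothesis.\<close>

type_synonym 'n mpmat = "'n \<Rightarrow> 'n \<Rightarrow> ereal"

definition mp_mult :: "('n::finite) mpmat \<Rightarrow> 'n mpmat \<Rightarrow> 'n mpmat" where
  "mp_mult A B = (\<lambda>i j. Max (range (\<lambda>k. A i k + B k j)))"

definition mp_plus :: "('n::finite) mpmat \<Rightarrow> 'n mpmat \<Rightarrow> 'n mpmat" where
  "mp_plus A B = (\<lambda>i j. max (A i j) (B i j))"

definition mp_id :: "('n::finite) mpmat" where
  "mp_id = (\<lambda>i j. if i = j then 0 else -\<infinity>)"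

fun mp_pow :: "('n::finite) mpmat \<Rightarrow> nat \<Rightarrow> 'n mpmat" where
  "mp_pow A 0 = mp_id"
| "mp_pow A (Suc t) = mp_mult (mp_pow A t) A"

definition arc :: "('n::finite) mpmat \<Rightarrow> 'n \<Rightarrow> 'n \<Rightarrow> bool" where
  "arc A i j \<longleftrightarrow> A i j \<noteq> -\<infinity>"

definition walk :: "('n::finite) mpmat \<Rightarrow> 'n list \<Rightarrow> bool" where
  "walk A w \<longleftrightarrow> w \<noteq> [] \<and> (\<forall>k < length w - 1. arc A (w ! k) (w ! Suc k))"

definition wlen :: "'a list \<Rightarrow> nat" where
  "wlen w = length w - 1"

definition weight :: "('n::finite) mpmat \<Rightarrow> 'n list \<Rightarrow> ereal" where
  "weight A w = (\<Sum>k < length w - 1. A (w ! k) (w ! Suc k))"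

definition cycle :: "('n::finite) mpmat \<Rightarrow> 'n list \<Rightarrow> bool" where
  "cycle A c \<longleftrightarrow> walk A c \<and> length c \<ge> 2 \<and> hd c = last c \<and> distinct (butlast c)"

definition cmean :: "('n::finite) mpmat \<Rightarrow> 'n list \<Rightarrow> ereal" where
  "cmean A c = weight A c / ereal (real (wlen c))"

definition lam :: "('n::finite) mpmat \<Rightarrow> ereal" where
  "lam A = Sup {cmean A c | c. cycle A c}"

definition crit_cycle :: "('n::finite) mpmat \<Rightarrow> 'n list \<Rightarrow> bool" where
  "crit_cycle A c \<longleftrightarrow> cycle A c \<and> cmean A c = lam A"

definition crit_node :: "('n::finite) mpmat \<Rightarrow> 'n \<Rightarrow> bool" where
  "crit_node A i \<longleftrightarrow> (\<exists>c. crit_cycle A c \<and> i \<in> set c)"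

definition crit_arc :: "('n::finite) mpmat \<Rightarrow> 'n \<Rightarrow> 'n \<Rightarrow> bool" where
  "crit_arc A i j \<longleftrightarrow> (\<exists>c. crit_cycle A c \<and> (\<exists>k < length c - 1. c ! k = i \<and> c ! Suc k = j))"

definition ccycle :: "('n::finite) mpmat \<Rightarrow> 'n list \<Rightarrow> bool" where
  "ccycle A c \<longleftrightarrow> cycle A c \<and> (\<forall>k < length c - 1. crit_arc A (c ! k) (c ! Suc k))"

definition crit_comp :: "('n::finite) mpmat \<Rightarrow> 'n \<Rightarrow> 'n set" where
  "crit_comp A i = {j. crit_node A j \<and> (i, j) \<in> {(a, b). crit_arc A a b}\<^sup>*
                                       \<and> (j, i) \<in> {(a, b). crit_arc A a b}\<^sup>*}"

definition comp_girth :: "('n::finite) mpmat \<Rightarrow> 'n \<Rightarrow> nat" where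
  "comp_girth A i = (LEAST l. \<exists>c. ccycle A c \<and> set c \<subseteq> crit_comp A i \<and> wlen c = l)"

definition comp_period :: "('n::finite) mpmat \<Rightarrow> 'n \<Rightarrow> nat" where
  "comp_period A i = Gcd {wlen c | c. ccycle A c \<and> set c \<subseteq> crit_comp A i}"

definition girth_crit :: "('n::finite) mpmat \<Rightarrow> nat" where
  "girth_crit A = Max {comp_girth A i | i. crit_node A i}"

definition cyclicity :: "('n::finite) mpmat \<Rightarrow> nat" where
  "cyclicity A = Lcm {comp_period A i | i. crit_node A i}"

text \<open>CSR terms (for lambda(A) = 0).\<close>

definition Mmat :: "('n::finite) mpmat \<Rightarrow> 'n mpmat" where
  "Mmat A = (\<lambda>i j. Max ((\<lambda>k. mp_pow (mp_pow A (cyclicity A)) k i j) ` {..< card (UNIV :: 'n set)}))"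

definition Cmat :: "('n::finite) mpmat \<Rightarrow> 'n mpmat" where
  "Cmat A = (\<lambda>i j. if crit_node A j then Mmat A i j else -\<infinity>)"

definition Rmat :: "('n::finite) mpmat \<Rightarrow> 'n mpmat" where
  "Rmat A = (\<lambda>i j. if crit_node A i then Mmat A i j else -\<infinity>)"

definition Smat :: "('n::finite) mpmat \<Rightarrow> 'n mpmat" where
  "Smat A = (\<lambda>i j. if crit_arc A i j then A i j else -\<infinity>)"

definition CSR :: "('n::finite) mpmat \<Rightarrow> nat \<Rightarrow> 'n mpmat" where
  "CSR A t = mp_mult (mp_mult (Cmat A) (mp_pow (Smat A) t)) (Rmat A)"

definition BN :: "('n::finite) mpmat \<Rightarrow> 'n mpmat" where
  "BN A = (\<lambda>i j. if crit_node A i \<or> crit_node A j then -\<infinity> else A i j)"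

definition T1 :: "('n::finite) mpmat \<Rightarrow> nat" where
  "T1 A = (LEAST T. \<forall>t \<ge> T. mp_pow A t = mp_plus (CSR A t) (mp_pow (BN A) t))"

definition DM :: "nat \<Rightarrow> nat \<Rightarrow> int" where
  "DM g n = int g * (int n - 2) + int n"

definition walk_thru :: "('n::finite) mpmat \<Rightarrow> 'n list \<Rightarrow> 'n \<Rightarrow> 'n \<Rightarrow> 'n list \<Rightarrow> bool" where
  "walk_thru A Z u v W \<longleftrightarrow> walk A W \<and> hd W = u \<and> last W = v \<and> set W \<inter> set Z \<noteq> {}"

definition twice_optimal :: "('n::finite) mpmat \<Rightarrow> 'n list \<Rightarrow> nat \<Rightarrow> 'n list \<Rightarrow> bool" where
  "twice_optimal A Z g W \<longleftrightarrow>
     walk_thru A Z (hd W) (last W) W \<and>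
     (\<forall>V. walk_thru A Z (hd W) (last W) V \<and> wlen V mod g = wlen W mod g
          \<longrightarrow> weight A V \<le> weight A W) \<and>
     (\<forall>V. walk_thru A Z (hd W) (last W) V \<and> wlen V mod g = wlen W mod g
          \<and> weight A V = weight A W \<longrightarrow> wlen W \<le> wlen V)"

definition interesting :: "('n::finite) mpmat \<Rightarrow> 'n list \<Rightarrow> nat \<Rightarrow> 'n list \<Rightarrow> bool" where
  "interesting A Z g W \<longleftrightarrow> twice_optimal A Z g W \<and>
     int (wlen W) = DM g (card (UNIV :: 'n set)) + int g - 1"

end

theory Submission
  imports Defs
begin


lemma weight_Nil[simp]: "weight A [] = 0" by (simp add: weight_def)
lemma weight_single[simp]: "weight A [x] = 0" by (simp add: weight_def)
lemma weight_Cons2[simp]: "weight A (x # y # zs) = A x y + weight A (y # zs)"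
  unfolding weight_def by (simp add: sum.lessThan_Suc_shift del: sum.lessThan_Suc)

lemma walk_single[simp]: "walk A [x]" by (simp add: walk_def)
lemma walk_Cons2[simp]: "walk A (x # y # zs) \<longleftrightarrow> arc A x y \<and> walk A (y # zs)"
  unfolding walk_def by (auto simp: less_Suc_eq_0_disj)

lemma walk_app: "walk A (xs @ y # ys) \<longleftrightarrow> walk A (xs @ [y]) \<and> walk A (y # ys)"
  by (induction xs rule: induct_list012) auto

lemma weight_app: "weight A (xs @ y # ys) = weight A (xs @ [y]) + weight A (y # ys)"
  by (induction xs rule: induct_list012) (auto simp: add.assoc)

lemma split3:
  "weight A (P @ x # M @ x # S) = weight A (P @ x # S) + weight A (x # M @ [x])"
  "walk A (P @ x # M @ x # S) \<longleftrightarrow> walk A (P @ x # S) \<and> walk A (x # M @ [x])"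
proof -
  have "weight A (P @ x # M @ x # S) = weight A (P @ [x]) + (weight A (x # M @ [x]) + weight A (x # S))"
    using weight_app[of A P x "M @ x # S"] weight_app[of A "x # M" x S] by simp
  moreover have "weight A (P @ x # S) = weight A (P @ [x]) + weight A (x # S)"
    using weight_app by metis
  ultimately show "weight A (P @ x # M @ x # S) = weight A (P @ x # S) + weight A (x # M @ [x])"
    by (simp add: ac_simps)
  show "walk A (P @ x # M @ x # S) \<longleftrightarrow> walk A (P @ x # S) \<and> walk A (x # M @ [x])"
    using walk_app[of A P x "M @ x # S"] walk_app[of A "x # M" x S] walk_app[of A P x S] by auto
qed

lemma closed_le0:
  assumes cyc: "\<And>c. cycle A c \<Longrightarrow> weight A c \<le> 0"
  shows "walk A c \<Longrightarrow> hd c = last c \<Longrightarrow> weight A c \<le> 0"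
proof (induction "length c" arbitrary: c rule: less_induct)
  case less
  show ?case
  proof (cases "length c \<ge> 2")
    case False
    have "c \<noteq> []" using less.prems by (simp add: walk_def)
    then obtain x xs where cx: "c = x # xs" by (cases c) auto
    with False have "xs = []" by (cases xs) auto
    with cx have "c = [x]" by simp
    then show ?thesis by simp
  next
    case True
    show ?thesis
    proof (cases "distinct (butlast c)")
      case True
      with \<open>length c \<ge> 2\<close> less.prems show ?thesis by (intro cyc) (simp add: cycle_def)
    next
      case False
      then obtain P M S x where bl: "butlast c = P @ [x] @ M @ [x] @ S"
        using not_distinct_decomp by blast
      have cne: "c \<noteq> []" using less.prems by (auto simp: walk_def)
      define l where "l = last c"
      have hdl: "hd c = l" using less.prems(2) l_def by simp
      have ceq: "c = P @ x # M @ x # (S @ [l])"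
        using bl append_butlast_last_id[OF cne] l_def by (metis append.assoc append_Cons append_Nil)
      have w: "walk A (P @ x # (S @ [l]))" "walk A (x # M @ [x])"
        using less.prems(1) ceq split3(2) by metis+
      have lt: "length (P @ x # (S @ [l])) < length c"
        using ceq by simp
      have hl: "hd (P @ x # (S @ [l])) = last (P @ x # (S @ [l]))"
        using hdl ceq by (cases P) auto
      have h1: "weight A (P @ x # (S @ [l])) \<le> 0"
        using less.hyps[OF lt w(1) hl] .
      have lt2: "length (x # M @ [x]) < length c"
        using ceq by simp
      have h2: "weight A (x # M @ [x]) \<le> 0"
        using less.hyps[OF lt2 w(2)] by simp
      have "weight A c = weight A (P @ x # (S @ [l])) + weight A (x # M @ [x])"
        using ceq split3(1) by metis
      also have "\<dots> \<le> 0 + 0" using h1 h2 by (intro add_mono)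
      finally show ?thesis by simp
    qed
  qed
qed



lemma remove:
  assumes cl: "\<And>c. walk A c \<Longrightarrow> hd c = last c \<Longrightarrow> weight A c \<le> 0"
  shows "finite F \<Longrightarrow> walk A W \<Longrightarrow> (\<forall>a\<in>F. a < e a \<and> e a < length W \<and> W!a = W!(e a))
    \<Longrightarrow> (\<forall>a\<in>F. \<forall>a'\<in>F. a < a' \<longrightarrow> e a \<le> a') \<Longrightarrow> p0 < length W
    \<Longrightarrow> (\<forall>a\<in>F. \<not>(a \<le> p0 \<and> p0 < e a))
    \<Longrightarrow> \<exists>V. walk A V \<and> hd V = hd W \<and> last V = last W \<and> weight A W \<le> weight A V
        \<and> length V + (\<Sum>a\<in>F. e a - a) = length W \<and> W!p0 \<in> set V"
proof (induction F arbitrary: W p0 rule: finite_linorder_max_induct)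
  case empty
  then show ?case by (intro exI[of _ W]) auto
next
  case (insert b F)
  define c where "c = e b"
  have bc: "b < c" "c < length W" "W!b = W!c" using insert.prems(2) c_def by auto
  define V1 where "V1 = take b W @ drop c W"
  define x where "x = W!b"
  define P where "P = take b W"
  define M where "M = take (c - b - 1) (drop (Suc b) W)"
  define S where "S = drop (Suc c) W"
  have d1: "drop c W = x # S" using bc x_def S_def by (metis Cons_nth_drop_Suc)
  have d2: "drop (Suc b) W = M @ drop c W"
  proof -
    have "drop (Suc b) W = M @ drop (c - b - 1) (drop (Suc b) W)" unfolding M_def by (rule append_take_drop_id[symmetric])
    moreover have "drop (c - b - 1) (drop (Suc b) W) = drop c W" using bc by simp
    ultimately show ?thesis by metis
  qed
  have Weq: "W = P @ x # M @ x # S"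
    using id_take_nth_drop[of b W] bc d1 d2 P_def x_def by simp
  have V1eq: "V1 = P @ x # S" using V1_def P_def d1 by simp
  have wV1: "walk A V1" and wC: "walk A (x # M @ [x])"
    using split3(2)[of A P x M S] insert.prems(1) Weq V1eq by auto
  have wt: "weight A W = weight A V1 + weight A (x # M @ [x])"
    using split3(1)[of A P x M S] Weq V1eq by simp
  have wle: "weight A W \<le> weight A V1"
  proof -
    have "weight A (x # M @ [x]) \<le> 0" using cl[OF wC] by simp
    then have "weight A V1 + weight A (x # M @ [x]) \<le> weight A V1 + 0" by (intro add_left_mono)
    then show ?thesis using wt by simp
  qed
  have lenV1: "length V1 = b + (length W - c)" using V1_def bc by simp
  have nth1: "\<And>k. k < b \<Longrightarrow> V1 ! k = W ! k" using V1_def bc by (simp add: nth_append)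
  have nth2: "\<And>k. b \<le> k \<Longrightarrow> k < length V1 \<Longrightarrow> V1 ! k = W ! (k - b + c)"
    using V1_def bc by (simp add: nth_append add.commute)
  have Fb: "\<forall>a\<in>F. e a \<le> b" using insert.prems(3) insert.hyps(2) by auto
  define p1 where "p1 = (if p0 < b then p0 else p0 - (c - b))"
  have p0nb: "\<not> (b \<le> p0 \<and> p0 < c)" using insert.prems(5) c_def by auto
  have p1: "p1 < length V1" "V1 ! p1 = W ! p0"
    using p0nb insert.prems(4) lenV1 nth1 nth2[of p1] bc unfolding p1_def by auto
  have IHa: "\<forall>a\<in>F. a < e a \<and> e a < length V1 \<and> V1!a = V1!(e a)"
  proof
    fix a assume a: "a \<in> F"
    have ab: "a < b" "e a \<le> b" using a insert.hyps(2) Fb by auto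
    have "a < e a" "W!a = W!(e a)" using a insert.prems(2) by auto
    moreover have "V1!(e a) = W!(e a)"
    proof (cases "e a < b")
      case True then show ?thesis using nth1 by simp
    next
      case False then have "e a = b" using ab by simp
      then show ?thesis using nth2[of b] lenV1 bc by simp
    qed
    ultimately show "a < e a \<and> e a < length V1 \<and> V1!a = V1!(e a)"
      using ab nth1 lenV1 bc by auto
  qed
  have IHd: "\<forall>a\<in>F. \<forall>a'\<in>F. a < a' \<longrightarrow> e a \<le> a'" using insert.prems(3) by auto
  have IHp: "\<forall>a\<in>F. \<not>(a \<le> p1 \<and> p1 < e a)"
  proof
    fix a assume a: "a \<in> F"
    show "\<not>(a \<le> p1 \<and> p1 < e a)"
    proof (cases "p0 < b")
      case True then show ?thesis using insert.prems(5) a p1_def by auto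
    next
      case False then have "p1 \<ge> b" using p0nb p1_def by auto
      then show ?thesis using Fb a by auto
    qed
  qed
  obtain V where V: "walk A V" "hd V = hd V1" "last V = last V1" "weight A V1 \<le> weight A V"
     "length V + (\<Sum>a\<in>F. e a - a) = length V1" "V1!p1 \<in> set V"
    using insert.IH[OF wV1 IHa IHd p1(1) IHp] by blast
  have "hd V1 = hd W" using Weq V1eq by (cases P) auto
  moreover have "last V1 = last W" using Weq V1eq by simp
  moreover have "b \<notin> F" using insert.hyps(2) by auto
  then have "(\<Sum>a\<in>insert b F. e a - a) = (c - b) + (\<Sum>a\<in>F. e a - a)"
    using insert.hyps(1) c_def by simp
  ultimately show ?case using V wle p1 lenV1 bc
    by (intro exI[of _ V]) auto
qed



lemma mod_cancel_aux: "((x::nat) + y) mod g = x mod g \<Longrightarrow> y mod g = 0"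
proof -
  assume h: "(x + y) mod g = x mod g"
  have "g dvd x + y - x" using mod_eq_dvd_iff_nat[of x "x + y" g] h by simp
  then show ?thesis by simp
qed

lemma zero_sum_subset:
  fixes F :: "nat set" and f :: "nat \<Rightarrow> nat"
  assumes fin: "finite F" and cg: "card F \<ge> g" and g0: "g > 0"
  shows "\<exists>J \<subseteq> F. J \<noteq> {} \<and> (\<Sum>a\<in>J. f a) mod g = 0"
proof -
  define xs where "xs = sorted_list_of_set F"
  have xs: "distinct xs" "set xs = F" "length xs = card F" using fin xs_def by auto
  define s where "s k = (\<Sum>i<k. f (xs!i)) mod g" for k
  have "s ` {..g} \<subseteq> {..<g}" using g0 s_def by auto
  then have "card (s ` {..g}) \<le> card {..<g}" by (intro card_mono) auto
  then have "card (s ` {..g}) \<le> g" by simp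
  then have "card (s ` {..g}) < card {..g}" by simp
  then have "\<not> inj_on s {..g}" using pigeonhole by blast
  then obtain u v where uv: "u \<le> g" "v \<le> g" "u \<noteq> v" "s u = s v"
    unfolding inj_on_def by auto
  obtain u' v' where uv': "u' < v'" "v' \<le> g" "s u' = s v'"
  proof (cases "u < v")
    case True then show ?thesis using that uv by blast
  next
    case False then have "v < u" using uv(3) by simp
    then show ?thesis using that uv by simp
  qed
  define J where "J = (\<lambda>i. xs!i) ` {u'..<v'}"
  have inj: "inj_on (\<lambda>i. xs!i) {u'..<v'}"
    using xs uv' cg by (intro inj_on_nth) auto
  have "J \<subseteq> F" using J_def xs uv' cg by auto
  moreover have "J \<noteq> {}" using J_def uv' by auto
  moreover have "(\<Sum>a\<in>J. f a) = (\<Sum>i\<in>{u'..<v'}. f (xs!i))"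
    unfolding J_def using inj by (simp add: sum.reindex)
  moreover have spl: "(\<Sum>i<v'. f (xs!i)) = (\<Sum>i<u'. f (xs!i)) + (\<Sum>i\<in>{u'..<v'}. f (xs!i))"
    using uv' by (simp add: atLeast0LessThan[symmetric] sum.atLeastLessThan_concat)
  moreover have "(\<Sum>i\<in>{u'..<v'}. f (xs!i)) mod g = 0"
  proof -
    have "((\<Sum>i<u'. f (xs!i)) + (\<Sum>i\<in>{u'..<v'}. f (xs!i))) mod g = (\<Sum>i<u'. f (xs!i)) mod g"
      using uv'(3) spl unfolding s_def by simp
    then show ?thesis by (rule mod_cancel_aux)
  qed
  ultimately show ?thesis by (intro exI[of _ J]) simp
qed

lemma card_occ: "card {p. p < length xs \<and> xs!p = x} = count_list xs x"
proof (induction xs rule: rev_induct)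
  case Nil then show ?case by simp
next
  case (snoc y xs)
  have "{p. p < length (xs @ [y]) \<and> (xs @ [y])!p = x}
      = {p. p < length xs \<and> xs!p = x} \<union> (if y = x then {length xs} else {})"
    by (auto simp: nth_append less_Suc_eq)
  then show ?case using snoc by auto
qed

lemma cycle_le0:
  assumes lam0: "lam A = 0" and c: "cycle A c"
  shows "weight A c \<le> 0"
proof -
  have "cmean A c \<in> {cmean A c | c. cycle A c}" using c by blast
  then have "cmean A c \<le> lam A" unfolding lam_def by (rule Sup_upper)
  then have le: "weight A c / ereal (real (wlen c)) \<le> 0" using lam0 by (simp add: cmean_def)
  have pos: "real (wlen c) > 0" using c by (auto simp: cycle_def wlen_def)
  show ?thesis
  proof (cases "weight A c")
    case (real r) then show ?thesis using le pos by (auto simp: divide_le_0_iff)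
  next
    case PInf then show ?thesis using le pos by auto
  next
    case MInf then show ?thesis by simp
  qed
qed

lemma no_reduce:
  assumes cl: "\<And>c. walk A c \<Longrightarrow> hd c = last c \<Longrightarrow> weight A c \<le> 0"
    and tw: "twice_optimal A Z g W" and g0: "g > 0"
    and F: "finite F" "F \<noteq> {}"
    and iv: "\<forall>a\<in>F. a < e a \<and> e a < length W \<and> W!a = W!(e a)"
    and dj: "\<forall>a\<in>F. \<forall>a'\<in>F. a < a' \<longrightarrow> e a \<le> a'"
    and p0: "p0 < length W" "W!p0 \<in> set Z" "\<forall>a\<in>F. \<not>(a \<le> p0 \<and> p0 < e a)"
    and md: "(\<Sum>a\<in>F. e a - a) mod g = 0"
  shows False
proof -
  have wW: "walk A W" using tw by (simp add: twice_optimal_def walk_thru_def)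
  obtain V where V: "walk A V" "hd V = hd W" "last V = last W" "weight A W \<le> weight A V"
     "length V + (\<Sum>a\<in>F. e a - a) = length W" "W!p0 \<in> set V"
    using remove[OF cl F(1) wW iv dj p0(1) p0(3)] by blast
  define s where "s = (\<Sum>a\<in>F. e a - a)"
  have spos: "s > 0" unfolding s_def using F iv by (intro sum_pos) auto
  have Vne: "V \<noteq> []" using V(1) by (simp add: walk_def)
  have "length V > 0" using Vne by simp
  then have wl: "wlen W = wlen V + s" using V(5) s_def unfolding wlen_def by linarith
  have wt: "walk_thru A Z (hd W) (last W) V"
    unfolding walk_thru_def using V(1,2,3,6) p0(2) by blast
  have "wlen W mod g = (wlen V + s mod g) mod g" using wl by (simp add: mod_add_right_eq)
  then have "wlen V mod g = wlen W mod g" using md s_def by simp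
  note md2 = this
  have t1: "\<forall>V. walk_thru A Z (hd W) (last W) V \<and> wlen V mod g = wlen W mod g \<longrightarrow> weight A V \<le> weight A W"
    using tw unfolding twice_optimal_def by (elim conjE)
  have t2: "\<forall>V. walk_thru A Z (hd W) (last W) V \<and> wlen V mod g = wlen W mod g \<and> weight A V = weight A W \<longrightarrow> wlen W \<le> wlen V"
    using tw unfolding twice_optimal_def by (elim conjE)
  have a1: "weight A V \<le> weight A W" using t1 wt md2 by blast
  have a2: "weight A V = weight A W \<longrightarrow> wlen W \<le> wlen V" using t2 wt md2 by blast
  have "weight A V = weight A W" using a1 V(4) by (rule antisym)
  then have "wlen W \<le> wlen V" using a2 by blast
  then show False using wl spos by linarith
qed

lemma no_big:
  assumes cl: "\<And>c. walk A c \<Longrightarrow> hd c = last c \<Longrightarrow> weight A c \<le> 0"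
    and tw: "twice_optimal A Z g W" and g0: "g > 0"
    and F: "finite F" "card F \<ge> g"
    and iv: "\<forall>a\<in>F. a < e a \<and> e a < length W \<and> W!a = W!(e a)"
    and dj: "\<forall>a\<in>F. \<forall>a'\<in>F. a < a' \<longrightarrow> e a \<le> a'"
    and sv: "\<And>J. J \<subseteq> F \<Longrightarrow> J \<noteq> {} \<Longrightarrow> \<exists>p0. p0 < length W \<and> W!p0 \<in> set Z \<and> (\<forall>a\<in>J. \<not>(a \<le> p0 \<and> p0 < e a))"
  shows False
proof -
  have "\<exists>J\<subseteq>F. J \<noteq> {} \<and> (\<Sum>a\<in>J. e a - a) mod g = 0" by (rule zero_sum_subset[OF F g0])
  then obtain J where J0: "J \<subseteq> F \<and> J \<noteq> {} \<and> (\<Sum>a\<in>J. e a - a) mod g = 0" ..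
  note J = J0[THEN conjunct1] J0[THEN conjunct2, THEN conjunct1] J0[THEN conjunct2, THEN conjunct2]
  obtain p0 where p0: "p0 < length W" "W!p0 \<in> set Z" "\<forall>a\<in>J. \<not>(a \<le> p0 \<and> p0 < e a)"
    using sv[OF J(1,2)] by blast
  have fJ: "finite J" using J(1) F(1) finite_subset by blast
  have ivJ: "\<forall>a\<in>J. a < e a \<and> e a < length W \<and> W!a = W!(e a)" using J(1) iv by blast
  have djJ: "\<forall>a\<in>J. \<forall>a'\<in>J. a < a' \<longrightarrow> e a \<le> a'" using J(1) dj by blast
  show False by (rule no_reduce[OF cl tw g0 fJ J(2) ivJ djJ p0 J(3)])
qed



lemma card_one_nat:
  fixes R :: "nat set"
  assumes "R \<noteq> {}" "\<And>x y. x \<in> R \<Longrightarrow> y \<in> R \<Longrightarrow> x < y \<Longrightarrow> False"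
  shows "card R = 1"
proof -
  obtain x where x: "x \<in> R" using assms(1) by blast
  have "R = {x}"
  proof
    show "R \<subseteq> {x}"
    proof
      fix y assume y: "y \<in> R"
      have "\<not> x < y" "\<not> y < x" using assms(2) x y by blast+
      then show "y \<in> {x}" by simp
    qed
  qed (use x in simp)
  then show ?thesis by simp
qed

theorem lemmal:
  fixes A :: "('n::finite) mpmat" and Z0 :: "'n list" and i j :: 'n and W :: "'n list"
  assumes fin: "\<forall>a b. A a b \<noteq> \<infinity>"
    and lam0: "lam A = 0"
    and T1eq: "int (T1 A) = DM (girth_crit A) (card (UNIV :: 'n set))"
    and Z0: "ccycle A Z0" "wlen Z0 = girth_crit A"
    and Z0uniq: "\<forall>c. ccycle A c \<and> wlen c = girth_crit A \<longrightarrow>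
                    (\<exists>k. butlast c = rotate k (butlast Z0))"
    and i: "i \<in> set Z0" and j: "j \<notin> set Z0"
    and W: "interesting A Z0 (girth_crit A) W"
  shows "(\<forall>p q. p < q \<and> q < length W \<and> W ! p = i \<and> W ! q = i
              \<and> (\<forall>r. p < r \<and> r < q \<longrightarrow> W ! r \<noteq> i)
            \<longrightarrow> card {r. p < r \<and> r < q \<and> W ! r = j} = 1)
       \<and> (\<forall>p. p < length W \<and> W ! p = i \<and> (\<forall>r < p. W ! r \<noteq> i)
            \<longrightarrow> card {r. r < p \<and> W ! r = j} = 1)
       \<and> (\<forall>q. q < length W \<and> W ! q = i \<and> (\<forall>r. q < r \<and> r < length W \<longrightarrow> W ! r \<noteq> i)
            \<longrightarrow> card {r. q < r \<and> r < length W \<and> W ! r = j} = 1)"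
proof -
  define g where "g = girth_crit A"
  define n where "n = card (UNIV :: 'n set)"
  define N where "N = length W"
  have cl: "weight A c \<le> 0" if "walk A c" "hd c = last c" for c
    using closed_le0[of A c] cycle_le0[OF lam0] that by blast
  have tw: "twice_optimal A Z0 g W" and lenW: "int (wlen W) = DM g n + int g - 1"
    using W by (simp_all add: interesting_def g_def n_def)
  have cyc: "cycle A Z0" using Z0(1) by (simp add: ccycle_def)
  then have Zd: "distinct (butlast Z0)" "length Z0 \<ge> 2" "hd Z0 = last Z0"
    by (simp_all add: cycle_def)
  have Zne: "Z0 \<noteq> []" using Zd by auto
  have bne: "butlast Z0 \<noteq> []" using Zd by (cases Z0) auto
  have setZ: "set Z0 = set (butlast Z0)"
  proof -
    obtain x xs where xs: "Z0 = x # xs" "xs \<noteq> []" using Zd(2) by (cases Z0; cases "tl Z0") auto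
    have "last Z0 = x" using Zd(3) xs by simp
    moreover have "x \<in> set (butlast Z0)" using xs by simp
    moreover have "set Z0 = set (butlast Z0 @ [last Z0])" using Zne by simp
    ultimately show ?thesis by auto
  qed
  have cardZ: "card (set Z0) = g"
    using setZ distinct_card[OF Zd(1)] Z0(2) by (simp add: g_def wlen_def)
  have "0 < card (set Z0)" using Zne by (simp add: card_gt_0_iff)
  then have g0: "g > 0" using cardZ by simp
  have "card (set Z0) \<le> card (UNIV :: 'n set)" by (rule card_mono) auto
  then have gn: "g \<le> n" using cardZ n_def by simp
  have wW: "walk A W" and thru: "set W \<inter> set Z0 \<noteq> {}"
    using tw by (simp_all add: twice_optimal_def walk_thru_def)
  have Wne: "W \<noteq> []" using wW by (simp add: walk_def)
  have NW: "N = g * n + (n - g)"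
  proof -
    have "length W \<ge> 1" using Wne by (cases W) auto
    then have "int (length W - 1) = int (length W) - 1" by (simp add: of_nat_diff)
    then have "int N - 1 = int g * (int n - 2) + int n + int g - 1"
      using lenW unfolding wlen_def DM_def N_def by simp
    then have "int N = int g * int n + (int n - int g)" by (simp add: algebra_simps)
    moreover have "int (g * n + (n - g)) = int g * int n + (int n - int g)" using gn by (simp add: of_nat_diff)
    ultimately have "int N = int (g * n + (n - g))" by simp
    then show ?thesis by (simp only: of_nat_eq_iff)
  qed
  define occ where "occ x = {p. p < N \<and> W!p = x}" for x
  define nx where "nx x p = Min {q. q < N \<and> W!q = x \<and> p < q}" for x p
  define sg where "sg x = {p. p < N \<and> W!p = x \<and> (\<exists>q. q < N \<and> W!q = x \<and> p < q)}" for x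
  have fin_occ: "finite (occ x)" for x unfolding occ_def by auto
  have fin_sg: "finite (sg x)" for x unfolding sg_def by auto
  have nxp: "a < nx x a \<and> nx x a < N \<and> W!(nx x a) = x \<and> W!a = x \<and> a < N" if "a \<in> sg x" for x a
  proof -
    have ne: "{q. q < N \<and> W!q = x \<and> a < q} \<noteq> {}" using that sg_def by auto
    have "nx x a \<in> {q. q < N \<and> W!q = x \<and> a < q}" unfolding nx_def by (rule Min_in) (use ne in auto)
    then show ?thesis using that sg_def by auto
  qed
  have nx_le: "nx x a \<le> r" if "r < N" "W!r = x" "a < r" for x a r
    unfolding nx_def by (rule Min_le) (use that in auto)
  have dj: "\<forall>a\<in>sg x. \<forall>a'\<in>sg x. a < a' \<longrightarrow> nx x a \<le> a'" for x
    using nx_le nxp by blast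
  have iv: "\<forall>a\<in>sg x. a < nx x a \<and> nx x a < length W \<and> W!a = W!(nx x a)" for x
    using nxp N_def by auto
  have uniq: "a = a'" if "a \<in> sg x" "a' \<in> sg x" "a \<le> p0" "p0 < nx x a" "a' \<le> p0" "p0 < nx x a'" for x a a' p0
  proof (rule ccontr)
    assume "a \<noteq> a'"
    then consider "a < a'" | "a' < a" by linarith
    then show False using dj[of x] that by (cases) force+
  qed
  have KB: "card {a \<in> sg x. \<not>(a \<le> p0 \<and> p0 < nx x a)} < g" if "p0 < N" "W!p0 \<in> set Z0" for x p0
  proof (rule ccontr)
    assume "\<not> ?thesis"
    then have c: "card {a \<in> sg x. \<not>(a \<le> p0 \<and> p0 < nx x a)} \<ge> g" by simp
    show False
    proof (rule no_big[OF cl tw g0 _ c])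
      show "finite {a \<in> sg x. \<not>(a \<le> p0 \<and> p0 < nx x a)}" using fin_sg by auto
      show "\<forall>a\<in>{a \<in> sg x. \<not>(a \<le> p0 \<and> p0 < nx x a)}. a < nx x a \<and> nx x a < length W \<and> W!a = W!(nx x a)"
        using iv by auto
      show "\<forall>a\<in>{a \<in> sg x. \<not>(a \<le> p0 \<and> p0 < nx x a)}. \<forall>a'\<in>{a \<in> sg x. \<not>(a \<le> p0 \<and> p0 < nx x a)}. a < a' \<longrightarrow> nx x a \<le> a'"
        using dj by auto
      show "\<exists>p0'. p0' < length W \<and> W!p0' \<in> set Z0 \<and> (\<forall>a\<in>J. \<not>(a \<le> p0' \<and> p0' < nx x a))"
        if "J \<subseteq> {a \<in> sg x. \<not>(a \<le> p0 \<and> p0 < nx x a)}" for J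
        using that \<open>p0 < N\<close> \<open>W!p0 \<in> set Z0\<close> N_def by blast
    qed
  qed
  have sg_occ: "sg x = occ x - {Max (occ x)}" for x
  proof (cases "occ x = {}")
    case True then show ?thesis unfolding sg_def occ_def by auto
  next
    case False
    have M: "Max (occ x) \<in> occ x" using Min_in False fin_occ by (simp add: Max_in)
    show ?thesis
    proof
      show "sg x \<subseteq> occ x - {Max (occ x)}"
      proof
        fix p assume "p \<in> sg x"
        then obtain q where q: "p < N" "W!p = x" "q < N" "W!q = x" "p < q" unfolding sg_def by auto
        have "q \<in> occ x" using q unfolding occ_def by simp
        then have "q \<le> Max (occ x)" using fin_occ by simp
        then have "p \<noteq> Max (occ x)" using q(5) by simp
        moreover have "p \<in> occ x" using q unfolding occ_def by simp
        ultimately have "p \<in> occ x" "p \<noteq> Max (occ x)" by simp_all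
        then show "p \<in> occ x - {Max (occ x)}" by blast
      qed
      show "occ x - {Max (occ x)} \<subseteq> sg x"
      proof
        fix p assume p: "p \<in> occ x - {Max (occ x)}"
        then have "p < Max (occ x)" using fin_occ by (simp add: order_neq_le_trans)
        then show "p \<in> sg x" using p M unfolding sg_def occ_def by auto
      qed
    qed
  qed
  have card_sg: "card (sg x) + 1 = card (occ x)" if "occ x \<noteq> {}" for x
  proof -
    have "Max (occ x) \<in> occ x" using that fin_occ by (simp add: Max_in)
    moreover have "card (occ x) > 0" using that fin_occ by (simp add: card_gt_0_iff)
    ultimately show ?thesis using sg_occ[of x] fin_occ by (simp add: card_Diff_singleton)
  qed
  obtain x0 where "x0 \<in> set W" "x0 \<in> set Z0" using thru by blast
  then obtain s0 where s0: "s0 < N" "W!s0 \<in> set Z0" using N_def by (auto simp: in_set_conv_nth)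
  have bound_all: "card (occ x) \<le> g + 1" for x
  proof (cases "occ x = {}")
    case True then show ?thesis by simp
  next
    case False
    let ?E = "{a \<in> sg x. \<not>(a \<le> s0 \<and> s0 < nx x a)}"
    let ?D = "{a \<in> sg x. a \<le> s0 \<and> s0 < nx x a}"
    have "card ?D \<le> 1" using uniq by (auto simp: card_le_Suc0_iff_eq)
    moreover have "sg x = ?E \<union> ?D" by auto
    then have "card (sg x) \<le> card ?E + card ?D" by (metis card_Un_le)
    ultimately have "card (sg x) \<le> g" using KB[OF s0, of x] by linarith
    then show ?thesis using card_sg[OF False] by linarith
  qed
  have bound_Z: "card (occ x) \<le> g" if "x \<in> set Z0" for x
  proof (cases "occ x = {}")
    case True then show ?thesis using g0 by simp
  next
    case False
    define p0 where "p0 = Max (occ x)"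
    have p0: "p0 \<in> occ x" using False fin_occ p0_def by (simp add: Max_in)
    have "{a \<in> sg x. \<not>(a \<le> p0 \<and> p0 < nx x a)} = sg x"
    proof -
      have "nx x a \<le> p0" if "a \<in> sg x" for a
      proof -
        have "a \<in> occ x" "a \<noteq> p0" using that sg_occ[of x] p0_def by auto
        moreover have "a \<le> p0" using \<open>a \<in> occ x\<close> fin_occ p0_def by simp
        ultimately have "a < p0" by simp
        then show ?thesis using nx_le p0 unfolding occ_def by auto
      qed
      then have h: "\<not> p0 < nx x a" if "a \<in> sg x" for a using that by (simp add: not_less)
      show ?thesis using h by blast
    qed
    then have "card (sg x) < g" using KB[of p0 x] p0 that unfolding occ_def by auto
    then show ?thesis using card_sg[OF False] by linarith
  qed
  define bd where "bd x = (if x \<in> set Z0 then g else g + 1)" for x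
  have le_bd: "card (occ x) \<le> bd x" for x using bound_all bound_Z bd_def by auto
  have sum_occ: "(\<Sum>x\<in>UNIV. card (occ x)) = N"
  proof -
    have "card (occ x) = count_list W x" for x using card_occ[of W x] unfolding occ_def N_def by simp
    then show ?thesis using sum_count_set[of W UNIV] N_def by simp
  qed
  have sum_bd: "(\<Sum>x\<in>UNIV. bd x) = N"
  proof -
    have "bd x = g + (if x \<notin> set Z0 then 1 else 0)" for x using bd_def by simp
    then have "(\<Sum>x\<in>UNIV. bd x) = g * n + (\<Sum>x\<in>UNIV. if x \<notin> set Z0 then 1 else 0)"
      by (simp add: sum.distrib n_def)
    also have "(\<Sum>x\<in>UNIV. if x \<notin> set Z0 then 1 else (0::nat)) = card (UNIV - set Z0)"
    proof -
      have "(\<Sum>x\<in>UNIV. if x \<notin> set Z0 then 1 else (0::nat)) = (\<Sum>x\<in>{x\<in>UNIV. x \<notin> set Z0}. 1)"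
        by (rule sum.inter_filter[symmetric]) simp
      also have "\<dots> = card {x\<in>UNIV. x \<notin> set Z0}" by simp
      also have "{x\<in>UNIV. x \<notin> set Z0} = UNIV - set Z0" by auto
      finally show ?thesis .
    qed
    also have "card (UNIV - set Z0) = n - g" using cardZ n_def by (simp add: card_Diff_subset)
    finally show ?thesis using NW by simp
  qed
  have eq_bd: "card (occ x) = bd x" for x
  proof (rule ccontr)
    assume "card (occ x) \<noteq> bd x"
    then have "card (occ x) < bd x" using le_bd[of x] by simp
    then have "(\<Sum>x\<in>UNIV. card (occ x)) < (\<Sum>x\<in>UNIV. bd x)"
      using le_bd by (intro sum_strict_mono_ex1) auto
    then show False using sum_occ sum_bd by simp
  qed
  have ci: "card (occ i) = g" using eq_bd[of i] i bd_def by simp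
  have cj: "card (occ j) = g + 1" using eq_bd[of j] j bd_def by simp
  have csj: "card (sg j) = g" using card_sg[of j] cj by fastforce
  have jni: "j \<noteq> i" using i j by auto
  have F1: "\<exists>a\<in>sg j. a < p0 \<and> p0 < nx j a" if p0: "p0 < N" "W!p0 \<in> set Z0" for p0
  proof -
    have "card {a \<in> sg j. \<not>(a \<le> p0 \<and> p0 < nx j a)} < card (sg j)" using KB[OF p0, of j] csj by simp
    moreover have "card (sg j) \<le> card {a \<in> sg j. \<not>(a \<le> p0 \<and> p0 < nx j a)}"
      if "sg j \<subseteq> {a \<in> sg j. \<not>(a \<le> p0 \<and> p0 < nx j a)}"
      by (rule card_mono) (use fin_sg that in auto)
    ultimately have "\<not> sg j \<subseteq> {a \<in> sg j. \<not>(a \<le> p0 \<and> p0 < nx j a)}"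
      by linarith
    then obtain a where a: "a \<in> sg j" "a \<le> p0" "p0 < nx j a" by auto
    have "W!a = j" using nxp[OF a(1)] by simp
    then have "a \<noteq> p0" using p0 j by auto
    then have "a < p0" using a(2) by simp
    then show ?thesis using a(1,3) by blast
  qed
  have F2: "\<exists>r. p < r \<and> r < q \<and> W!r = j"
    if pq: "p < q" "q < N" "W!p = i" "W!q = i" "\<forall>r. p < r \<and> r < q \<longrightarrow> W!r \<noteq> i" for p q
  proof (rule ccontr)
    assume nj: "\<not> ?thesis"
    have pN: "p < N" using pq(1,2) by simp
    have pZ: "W!p \<in> set Z0" using pq(3) i by simp
    obtain a where a: "a \<in> sg j" "a < p" "p < nx j a" using F1[OF pN pZ] by blast
    have aq: "q < nx j a"
    proof -
      have wj: "W!(nx j a) = j" using nxp[OF a(1)] by blast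
      then have "nx j a \<noteq> q" using pq(4) jni by auto
      moreover have "\<not> (p < nx j a \<and> nx j a < q)" using nj wj by blast
      ultimately show ?thesis using a(3) by linarith
    qed
    define E where "E = {a' \<in> sg j. \<not>(a' \<le> p \<and> p < nx j a')}"
    have ale: "a \<le> p" using a(2) by simp
    have sgE: "sg j = insert a E"
    proof
      show "sg j \<subseteq> insert a E"
      proof
        fix a' assume a': "a' \<in> sg j"
        show "a' \<in> insert a E"
        proof (cases "a' \<le> p \<and> p < nx j a'")
          case True
          then have "a' = a" using uniq[OF a' a(1), of p] ale a(3) by blast
          then show ?thesis by simp
        next
          case False then have "a' \<in> E" using a' unfolding E_def by simp
          then show ?thesis by simp
        qed
      qed
      show "insert a E \<subseteq> sg j" using a(1) unfolding E_def by blast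
    qed
    have aE: "a \<notin> E" using ale a(3) unfolding E_def by simp
    have finE: "finite E" unfolding E_def using fin_sg[of j] by simp
    have cE: "card E + 1 = g"
    proof -
      have "card (insert a E) = card E + 1" using finE aE by simp
      then show ?thesis using csj sgE by simp
    qed
    have pE: "p \<notin> E"
    proof
      assume "p \<in> E"
      then have "p \<in> sg j" unfolding E_def by simp
      then have "W!p = j" using nxp[of p j] by blast
      then show False using pq(3) jni by simp
    qed
    define G where "G = insert p E"
    define e' where "e' = (nx j)(p := q)"
    have cG: "card G = g" using cE pE finE unfolding G_def by simp
    have Epos: "a' < a \<and> nx j a' \<le> a \<or> nx j a \<le> a'" if "a' \<in> E" for a'
    proof -
      have a': "a' \<in> sg j" using that unfolding E_def by simp
      have "a' \<noteq> a" using that aE by blast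
      then consider "a' < a" | "a < a'" by linarith
      then show ?thesis
      proof cases
        case 1 then have "nx j a' \<le> a" using dj[of j] a' a(1) by blast
        then show ?thesis using 1 by simp
      next
        case 2 then have "nx j a \<le> a'" using dj[of j] a' a(1) by blast
        then show ?thesis by simp
      qed
    qed
    show False
    proof (rule no_big[OF cl tw g0, of G e'])
      show "finite G" using finE G_def by simp
      show "g \<le> card G" using cG by simp
      show "\<forall>a\<in>G. a < e' a \<and> e' a < length W \<and> W!a = W!(e' a)"
        using pq iv[of j] pE E_def N_def unfolding G_def e'_def by auto
      show "\<forall>a1\<in>G. \<forall>a2\<in>G. a1 < a2 \<longrightarrow> e' a1 \<le> a2"
      proof (intro ballI impI)
        fix a1 a2 assume a12: "a1 \<in> G" "a2 \<in> G" "a1 < a2"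
        show "e' a1 \<le> a2"
        proof (cases "a1 = p")
          case True
          then have "a2 \<in> E" "a2 \<noteq> p" using a12 G_def by auto
          then have "nx j a \<le> a2" using Epos[of a2] a12 True a by auto
          then show ?thesis using True aq e'_def by simp
        next
          case False
          then have a1E: "a1 \<in> E" using a12 G_def by auto
          show ?thesis
          proof (cases "a2 = p")
            case True
            have "\<not> nx j a \<le> a1" using a1E True a12 a aq by auto
            then have "nx j a1 \<le> a" using Epos[OF a1E] by auto
            then show ?thesis using False True e'_def a by simp
          next
            case False2: False
            then have "a2 \<in> E" using a12 G_def by auto
            then show ?thesis using dj[of j] a1E a12 False E_def e'_def by auto
          qed
        qed
      qed
      show "\<exists>p0. p0 < length W \<and> W!p0 \<in> set Z0 \<and> (\<forall>a\<in>J. \<not>(a \<le> p0 \<and> p0 < e' a))"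
        if J: "J \<subseteq> G" "J \<noteq> {}" for J
      proof (cases "p \<in> J")
        case True
        have "\<forall>a'\<in>J. \<not>(a' \<le> q \<and> q < e' a')"
        proof
          fix a' assume "a' \<in> J"
          show "\<not>(a' \<le> q \<and> q < e' a')"
          proof (cases "a' = p")
            case True then show ?thesis using e'_def by simp
          next
            case False
            then have a'E: "a' \<in> E" using \<open>a' \<in> J\<close> J G_def by auto
            then show ?thesis using Epos[OF a'E] False e'_def a aq pq(1) by auto
          qed
        qed
        moreover have "q < length W" "W!q \<in> set Z0" using pq(2,4) i N_def by simp_all
        ultimately show ?thesis by blast
      next
        case False
        have "\<not>(a' \<le> p \<and> p < e' a')" if "a' \<in> J" for a'
        proof -
          have "a' \<in> E" "a' \<noteq> p" using that False J(1) G_def by auto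
          then show ?thesis unfolding E_def e'_def by simp
        qed
        moreover have "p < length W" "W!p \<in> set Z0" using pq(1,2,3) i N_def by simp_all
        ultimately show ?thesis by blast
      qed
    qed
  qed
  define seg where "seg p = (SOME a. a \<in> sg j \<and> a < p \<and> p < nx j a)" for p
  have segP: "seg p \<in> sg j \<and> seg p < p \<and> p < nx j (seg p)" if "p \<in> occ i" for p
  proof -
    have "\<exists>a. a \<in> sg j \<and> a < p \<and> p < nx j a" using F1[of p] that i occ_def by auto
    then show ?thesis unfolding seg_def by (rule someI_ex)
  qed
  have seg_ne: "seg p \<noteq> seg p'" if pp: "p \<in> occ i" "p' \<in> occ i" "p < p'" for p p'
  proof
    assume eq: "seg p = seg p'"
    define q where "q = Min {r. r < N \<and> W!r = i \<and> p < r}"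
    have ne: "{r. r < N \<and> W!r = i \<and> p < r} \<noteq> {}" using pp occ_def by auto
    have qin: "q \<in> {r. r < N \<and> W!r = i \<and> p < r}" unfolding q_def by (rule Min_in) (use ne in auto)
    have qle: "q \<le> p'" unfolding q_def by (rule Min_le) (use pp occ_def in auto)
    have cons: "\<forall>r. p < r \<and> r < q \<longrightarrow> W!r \<noteq> i"
    proof (intro allI impI)
      fix r assume r: "p < r \<and> r < q"
      show "W!r \<noteq> i"
      proof
        assume "W!r = i"
        then have "q \<le> r" unfolding q_def using r qin by (intro Min_le) auto
        then show False using r by simp
      qed
    qed
    obtain r where r: "p < r" "r < q" "W!r = j" using F2[of p q] qin cons pp occ_def by auto
    have "nx j (seg p) \<le> r" using nx_le[of r j "seg p"] r qin segP[OF pp(1)] by auto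
    moreover have "p' < nx j (seg p)" using segP[OF pp(2)] eq by simp
    ultimately show False using r qle by simp
  qed
  have inj: "inj_on seg (occ i)"
  proof (rule inj_onI)
    fix p p' assume "p \<in> occ i" "p' \<in> occ i" "seg p = seg p'"
    then show "p = p'" using seg_ne[of p p'] seg_ne[of p' p] by (cases "p < p'"; cases "p' < p") auto
  qed
  have img: "seg ` occ i = sg j"
  proof (rule card_subset_eq[OF fin_sg])
    show "seg ` occ i \<subseteq> sg j" using segP by auto
    show "card (seg ` occ i) = card (sg j)" using card_image[OF inj] ci csj by simp
  qed
  have F3: "\<exists>r. b < r \<and> r < nx j b \<and> W!r = i" if "b \<in> sg j" for b
  proof -
    have "b \<in> seg ` occ i" using img that by simp
    then obtain p where p: "p \<in> occ i" "b = seg p" by blast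
    then show ?thesis using segP[OF p(1)] occ_def by auto
  qed
  have jj: "\<exists>r. a < r \<and> r < b \<and> W!r = i" if "a < b" "b < N" "W!a = j" "W!b = j" for a b
  proof -
    have "a \<in> sg j" using that sg_def by auto
    then obtain r where "a < r" "r < nx j a" "W!r = i" using F3 by blast
    moreover have "nx j a \<le> b" using nx_le that by auto
    ultimately show ?thesis by auto
  qed
  show ?thesis
  proof (intro conjI allI impI)
    fix p q assume h: "p < q \<and> q < length W \<and> W ! p = i \<and> W ! q = i
              \<and> (\<forall>r. p < r \<and> r < q \<longrightarrow> W ! r \<noteq> i)"
    show "card {r. p < r \<and> r < q \<and> W ! r = j} = 1"
    proof (rule card_one_nat)
      show "{r. p < r \<and> r < q \<and> W ! r = j} \<noteq> {}" using F2[of p q] h N_def by auto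
      fix x y assume "x \<in> {r. p < r \<and> r < q \<and> W ! r = j}" "y \<in> {r. p < r \<and> r < q \<and> W ! r = j}" "x < y"
      then show False using jj[of x y] h N_def by auto
    qed
  next
    fix p assume h: "p < length W \<and> W ! p = i \<and> (\<forall>r < p. W ! r \<noteq> i)"
    show "card {r. r < p \<and> W ! r = j} = 1"
    proof (rule card_one_nat)
      obtain a where "a \<in> sg j" "a < p" using F1[of p] h i N_def by auto
      then show "{r. r < p \<and> W ! r = j} \<noteq> {}" using nxp by blast
      fix x y assume "x \<in> {r. r < p \<and> W ! r = j}" "y \<in> {r. r < p \<and> W ! r = j}" "x < y"
      then show False using jj[of x y] h N_def by auto
    qed
  next
    fix q assume h: "q < length W \<and> W ! q = i \<and> (\<forall>r. q < r \<and> r < length W \<longrightarrow> W ! r \<noteq> i)"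
    show "card {r. q < r \<and> r < length W \<and> W ! r = j} = 1"
    proof (rule card_one_nat)
      obtain a where "a \<in> sg j" "q < nx j a" using F1[of q] h i N_def by auto
      then show "{r. q < r \<and> r < length W \<and> W ! r = j} \<noteq> {}" using nxp N_def by blast
      fix x y assume "x \<in> {r. q < r \<and> r < length W \<and> W ! r = j}" "y \<in> {r. q < r \<and> r < length W \<and> W ! r = j}" "x < y"
      then show False using jj[of x y] h N_def by auto
    qed
  qed
qed


end
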